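(* Let $\beta$ be a constant, $K$ a smooth positive function with antiderivative $J(u)=\int K(u)\,du$ assumed invertible, and $C(u)=\beta K(u)$. For arbitrary constants $C_0,C_1$, the functions $$u(z,t)=J^{-1}\!\left(\frac{C_0}{z\sqrt{t}}\exp\!\left(-\frac{\beta z^2}{4t}\right)\right)\qquad\text{and}\qquad u(z,t)=J^{-1}\!\left(\frac{C_1}{z}\right)$$ are solutions (for $z>0$, $t>0$, wherever the arguments lie in the range of $J$) of the equation $C(u)u_t=z^{-2}\left(K(u)z^{2}u_z\right)_z$. *)

theory Defs
  imports "HOL-Analysis.Analysis"
begin

definition pde_solution ::
  "(real \<Rightarrow> real) \<Rightarrow> (real \<Rightarrow> real) \<Rightarrow> (real \<Rightarrow> real \<Rightarrow> real) \<Rightarrow> (real \<times> real) set \<Rightarrow> bool"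
where
  "pde_solution C K u S \<longleftrightarrow>
     (\<forall>(z,t)\<in>S.
        (\<lambda>z'. u z' t) differentiable (at z) \<and>
        (\<lambda>t'. u z t') differentiable (at t) \<and>
        (\<lambda>z'. K (u z' t) * z'^2 * deriv (\<lambda>z''. u z'' t) z') differentiable (at z) \<and>
        C (u z t) * deriv (\<lambda>t'. u z t') t
          = (1 / z^2) * deriv (\<lambda>z'. K (u z' t) * z'^2 * deriv (\<lambda>z''. u z'' t) z') z)"

end

theory Submission
  imports Defs "HOL-Complex_Analysis.Conformal_Mappings"
begin

lemma range_open:
  fixes J K :: "real \<Rightarrow> real"
  assumes K_pos: "\<forall>x. K x > 0"
      and J_antideriv: "\<forall>x. (J has_real_derivative K x) (at x)"
  shows "open (range J)"
proof -
  have cont: "continuous_on UNIV J"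
    using J_antideriv by (meson DERIV_isCont continuous_at_imp_continuous_on)
  have mono: "strict_mono J"
    by (rule strict_monoI, rule DERIV_pos_imp_increasing[of _ _ J]) (use J_antideriv K_pos in auto)
  have key: "\<exists>T. open T \<and> J x \<in> T \<and> T \<subseteq> range J" for x
  proof -
    have a: "J (x - 1) < J x" "J x < J (x + 1)" using mono by (auto simp: strict_mono_def)
    have sub: "{J (x - 1) <..< J (x + 1)} \<subseteq> range J"
    proof
      fix v assume v: "v \<in> {J (x - 1) <..< J (x + 1)}"
      have "\<exists>s. x - 1 \<le> s \<and> s \<le> x + 1 \<and> J s = v"
        by (rule IVT) (use v J_antideriv in \<open>auto intro: DERIV_isCont\<close>)
      then show "v \<in> range J" by auto
    qed
    show ?thesis
      using a sub by (intro exI[of _ "{J (x - 1) <..< J (x + 1)}"]) auto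
  qed
  show ?thesis by (subst open_subopen) (use key in auto)
qed

lemma inv_deriv:
  fixes J K :: "real \<Rightarrow> real"
  assumes K_pos: "\<forall>x. K x > 0"
      and J_antideriv: "\<forall>x. (J has_real_derivative K x) (at x)"
      and J_inj: "inj J"
      and y: "y \<in> range J"
  shows "(inv J has_real_derivative inverse (K (inv J y))) (at y)"
proof -
  obtain x where x: "y = J x" using y by auto
  have cont: "continuous_on UNIV J"
    using J_antideriv by (meson DERIV_isCont continuous_at_imp_continuous_on)
  have "(inv J has_real_derivative inverse (K x)) (at (J x))"
    by (rule has_field_derivative_inverse_strong[where S=UNIV])
       (use J_antideriv K_pos cont J_inj in \<open>auto simp: less_imp_neq[symmetric]\<close>)
  then show ?thesis using x J_inj by simp
qed

lemma generic:
  fixes J K C :: "real \<Rightarrow> real" and w wz wt g :: "real \<Rightarrow> real \<Rightarrow> real" and \<beta> D :: real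
  assumes K_pos: "\<forall>x. K x > 0"
      and J_antideriv: "\<forall>x. (J has_real_derivative K x) (at x)"
      and J_inj: "inj J"
      and C_def: "C = (\<lambda>x. \<beta> * K x)"
      and z: "z > 0" and t: "t > 0" and wr: "w z t \<in> range J"
      and dz: "\<And>z'. z' > 0 \<Longrightarrow> ((\<lambda>z. w z t) has_real_derivative wz z' t) (at z')"
      and dt: "((\<lambda>t. w z t) has_real_derivative wt z t) (at t)"
      and gq: "\<And>z'. z' > 0 \<Longrightarrow> z'^2 * wz z' t = g z' t"
      and dg: "((\<lambda>z. g z t) has_real_derivative D) (at z)"
      and eq: "\<beta> * wt z t = (1 / z^2) * D"
  shows "(\<lambda>z'. inv J (w z' t)) differentiable (at z) \<and>
        (\<lambda>t'. inv J (w z t')) differentiable (at t) \<and>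
        (\<lambda>z'. K (inv J (w z' t)) * z'^2 * deriv (\<lambda>z''. inv J (w z'' t)) z') differentiable (at z) \<and>
        C (inv J (w z t)) * deriv (\<lambda>t'. inv J (w z t')) t
          = (1 / z^2) * deriv (\<lambda>z'. K (inv J (w z' t)) * z'^2 * deriv (\<lambda>z''. inv J (w z'' t)) z') z"
proof -
  have op: "open (range J)" by (rule range_open[OF K_pos J_antideriv])
  have uz: "((\<lambda>z. inv J (w z t)) has_real_derivative inverse (K (inv J (w z' t))) * wz z' t) (at z')"
    if "z' > 0" "w z' t \<in> range J" for z'
    by (rule DERIV_chain2[OF inv_deriv[OF K_pos J_antideriv J_inj that(2)] dz[OF that(1)]])
  have ut: "((\<lambda>t. inv J (w z t)) has_real_derivative inverse (K (inv J (w z t))) * wt z t) (at t)"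
    by (rule DERIV_chain2[OF inv_deriv[OF K_pos J_antideriv J_inj wr] dt])
  have "isCont (\<lambda>z. w z t) z" using dz[OF z] by (rule DERIV_isCont)
  then have "((\<lambda>z. w z t) \<longlongrightarrow> w z t) (nhds z)"
    using tendsto_at_iff_tendsto_nhds[of "\<lambda>z. w z t" z] by (simp add: isCont_def)
  then have ev1: "eventually (\<lambda>z'. w z' t \<in> range J) (nhds z)"
    using topological_tendstoD op wr by blast
  have ev2: "eventually (\<lambda>z'. z' > 0) (nhds z)"
    using eventually_nhds_in_open[of "{0<..}" z] z by auto
  have ev: "eventually (\<lambda>z'. K (inv J (w z' t)) * z'^2 * deriv (\<lambda>z''. inv J (w z'' t)) z' = g z' t) (nhds z)"
    using ev1 ev2
  proof eventually_elim
    case (elim z')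
    have "deriv (\<lambda>z''. inv J (w z'' t)) z' = inverse (K (inv J (w z' t))) * wz z' t"
      using uz[OF elim(2,1)] by (rule DERIV_imp_deriv)
    moreover have "K (inv J (w z' t)) \<noteq> 0" using K_pos by (metis less_irrefl)
    ultimately show ?case using gq[OF elim(2)] by (simp add: field_simps)
  qed
  have dG: "((\<lambda>z'. K (inv J (w z' t)) * z'^2 * deriv (\<lambda>z''. inv J (w z'' t)) z') has_real_derivative D) (at z)"
    using DERIV_cong_ev[OF refl ev refl] dg by simp
  have Kn: "K (inv J (w z t)) \<noteq> 0" using K_pos by (metis less_irrefl)
  show ?thesis
  proof (intro conjI)
    show "(\<lambda>z'. inv J (w z' t)) differentiable (at z)"
      using uz[OF z wr] real_differentiable_def by blast
    show "(\<lambda>t'. inv J (w z t')) differentiable (at t)"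
      using ut real_differentiable_def by blast
    show "(\<lambda>z'. K (inv J (w z' t)) * z'^2 * deriv (\<lambda>z''. inv J (w z'' t)) z') differentiable (at z)"
      using dG real_differentiable_def by blast
    show "C (inv J (w z t)) * deriv (\<lambda>t'. inv J (w z t')) t
          = (1 / z^2) * deriv (\<lambda>z'. K (inv J (w z' t)) * z'^2 * deriv (\<lambda>z''. inv J (w z'' t)) z') z"
      using DERIV_imp_deriv[OF ut] DERIV_imp_deriv[OF dG] eq Kn C_def by (simp add: field_simps)
  qed
qed


theorem mainTheorem11:
  fixes \<beta> C0 C1 :: real and K J C :: "real \<Rightarrow> real"
  assumes K_smooth: "\<forall>n x. ((deriv ^^ n) K) differentiable (at x)"
      and K_pos: "\<forall>x. K x > 0"
      and J_antideriv: "\<forall>x. (J has_real_derivative K x) (at x)"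
      and J_inj: "inj J"
      and C_def: "C = (\<lambda>x. \<beta> * K x)"
  shows "pde_solution C K
           (\<lambda>z t. inv J (C0 / (z * sqrt t) * exp (- \<beta> * z^2 / (4 * t))))
           {(z, t). z > 0 \<and> t > 0 \<and> C0 / (z * sqrt t) * exp (- \<beta> * z^2 / (4 * t)) \<in> range J}
       \<and> pde_solution C K
           (\<lambda>z t. inv J (C1 / z))
           {(z, t). z > 0 \<and> t > 0 \<and> C1 / z \<in> range J}"
proof -
  let ?E = "\<lambda>z t. exp (- \<beta> * z^2 / (4 * t))"
  have P1: "pde_solution C K
           (\<lambda>z t. inv J (C0 / (z * sqrt t) * exp (- \<beta> * z^2 / (4 * t))))
           {(z, t). z > 0 \<and> t > 0 \<and> C0 / (z * sqrt t) * exp (- \<beta> * z^2 / (4 * t)) \<in> range J}"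
    unfolding pde_solution_def
    apply (intro ballI)
    apply clarify
    subgoal premises prems for z t
  proof -
    have z: "z > 0" and t: "t > 0" using prems by auto
    have wr: "C0 / (z * sqrt t) * exp (- \<beta> * z^2 / (4 * t)) \<in> range J" using prems by simp
    have st: "sqrt t > 0" using t by simp
    have sq2: "sqrt t * (sqrt t * x) = t * x" for x
      using t by (simp add: mult.assoc[symmetric])
    have dz: "((\<lambda>z. C0 / (z * sqrt t) * exp (- \<beta> * z^2 / (4 * t))) has_real_derivative
        C0 / (z' * sqrt t) * exp (- \<beta> * z'^2 / (4 * t)) * (-1/z' - \<beta>*z'/(2*t))) (at z')"
      if "z' > 0" for z'
      using that st t
      by (auto intro!: derivative_eq_intros simp: field_simps power2_eq_square real_sqrt_mult_self sq2)
    have dt: "((\<lambda>t. C0 / (z * sqrt t) * exp (- \<beta> * z^2 / (4 * t))) has_real_derivative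
        C0 / (z * sqrt t) * exp (- \<beta> * z^2 / (4 * t)) * (-1/(2*t) + \<beta>*z^2/(4*t^2))) (at t)"
      using z st t
      by (auto intro!: derivative_eq_intros simp: field_simps power2_eq_square real_sqrt_mult_self sq2)
    have gq: "z'^2 * (C0 / (z' * sqrt t) * exp (- \<beta> * z'^2 / (4 * t)) * (-1/z' - \<beta>*z'/(2*t)))
        = - C0 / sqrt t * exp (- \<beta> * z'^2 / (4 * t)) * (1 + \<beta>*z'^2/(2*t))" if "z' > 0" for z'
      using that st t by (simp add: field_simps power2_eq_square)
    have dg: "((\<lambda>z. - C0 / sqrt t * exp (- \<beta> * z^2 / (4 * t)) * (1 + \<beta>*z^2/(2*t))) has_real_derivative
        - C0 / sqrt t * exp (- \<beta> * z^2 / (4 * t)) * (\<beta>*z/(2*t)) * (1 - \<beta>*z^2/(2*t))) (at z)"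
      using z st t
      by (auto intro!: derivative_eq_intros simp: field_simps power2_eq_square real_sqrt_mult_self sq2)
    have eq: "\<beta> * (C0 / (z * sqrt t) * exp (- \<beta> * z^2 / (4 * t)) * (-1/(2*t) + \<beta>*z^2/(4*t^2)))
        = (1 / z^2) * (- C0 / sqrt t * exp (- \<beta> * z^2 / (4 * t)) * (\<beta>*z/(2*t)) * (1 - \<beta>*z^2/(2*t)))"
      using z st t by (simp add: field_simps power2_eq_square)
    note G = generic[where w="\<lambda>z t. C0 / (z * sqrt t) * exp (- \<beta> * z^2 / (4 * t))"
        and wz="\<lambda>z t. C0 / (z * sqrt t) * exp (- \<beta> * z^2 / (4 * t)) * (-1/z - \<beta>*z/(2*t))"
        and wt="\<lambda>z t. C0 / (z * sqrt t) * exp (- \<beta> * z^2 / (4 * t)) * (-1/(2*t) + \<beta>*z^2/(4*t^2))"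
        and g="\<lambda>z t. - C0 / sqrt t * exp (- \<beta> * z^2 / (4 * t)) * (1 + \<beta>*z^2/(2*t))",
        OF K_pos J_antideriv J_inj C_def z t wr dz dt gq dg eq]
    then show ?thesis by simp
  qed
  done
  have P2: "pde_solution C K (\<lambda>z t. inv J (C1 / z)) {(z, t). z > 0 \<and> t > 0 \<and> C1 / z \<in> range J}"
    unfolding pde_solution_def
    apply (intro ballI)
    apply clarify
    subgoal premises prems for z t
  proof -
    have z: "z > 0" and t: "t > 0" and wr: "C1 / z \<in> range J" using prems by auto
    have dz: "((\<lambda>z. C1 / z) has_real_derivative - C1 / z'^2) (at z')" if "z' > 0" for z'
      using that by (auto intro!: derivative_eq_intros simp: field_simps power2_eq_square)
    have dt: "((\<lambda>t. C1 / z) has_real_derivative 0) (at t)" by simp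
    have gq: "z'^2 * (- C1 / z'^2) = - C1" if "z' > 0" for z' using that by simp
    have dg: "((\<lambda>z. - C1) has_real_derivative 0) (at z)" by simp
    note G = generic[where w="\<lambda>z t. C1 / z" and wz="\<lambda>z t. - C1 / z^2" and wt="\<lambda>z t. 0"
        and g="\<lambda>z t. - C1" and D=0 and \<beta>=\<beta>,
        OF K_pos J_antideriv J_inj C_def z t wr dz dt gq dg]
    then show ?thesis by simp
  qed
  done
  show ?thesis using P1 P2 by blast
qed

end
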